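(* Let $P$ be a rooted forest on $[n]$ with natural labeling and let $\mathcal{M}^{\hat\partial}$ be the monoid of maps $\mathcal{L}(P)\to\mathcal{L}(P)$ generated by $\hat\partial_1,\dots,\hat\partial_n$. If $x\in\mathcal{M}^{\hat\partial}$ is idempotent ($x^2=x$), then $\operatorname{Rfactor}(x)=I_x$.
   Context: A rooted forest is a disjoint union of rooted trees, a rooted tree being a connected finite poset in which each element is covered by at most one element. $\mathcal{L}(P)=\{\pi\in S_n : i\prec j \Rightarrow \pi^{-1}_i<\pi^{-1}_j\}$ in one-line notation. $\pi\tau_i$ ($1\le i<n$) swaps $\pi_i,\pi_{i+1}$ if incomparable and is $\pi$ otherwise; $\partial_j=\tau_j\cdots\tau_{n-1}$; $\hat\partial_i$ is defined by $\pi\hat\partial_i=\pi\partial_{\pi^{-1}_i}$. Maps act on the right and compose as $\pi(xy)=(\pi x)y$; the monoid contains the identity. For $x\in\mathcal{M}^{\hat\partial}$: $\operatorname{im}(x)=\{\pi x:\pi\in\mathcal{L}(P)\}$; $\operatorname{rfactor}(x)$ is the longest word $u$ such that every element of $\operatorname{im}(x)$ (as a word $\pi_1\cdots\pi_n$) ends with $u$; $\operatorname{Rfactor}(x)$ is the set of letters of $\operatorname{rfactor}(x)$; $I_x=\{i\in[n]:\hat\partial_i x=x\}$. *)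

theory Defs
  imports Main "HOL-Library.Sublist"
begin

definition strict_poset_on :: "nat \<Rightarrow> (nat \<Rightarrow> nat \<Rightarrow> bool) \<Rightarrow> bool" where
  "strict_poset_on n prec \<longleftrightarrow>
     (\<forall>a b. prec a b \<longrightarrow> a \<in> {1..n} \<and> b \<in> {1..n}) \<and>
     (\<forall>a. \<not> prec a a) \<and>
     (\<forall>a b c. prec a b \<longrightarrow> prec b c \<longrightarrow> prec a c)"

definition covers :: "(nat \<Rightarrow> nat \<Rightarrow> bool) \<Rightarrow> nat \<Rightarrow> nat \<Rightarrow> bool" where
  "covers prec a b \<longleftrightarrow> prec a b \<and> \<not> (\<exists>c. prec a c \<and> prec c b)"

definition rooted_forest :: "nat \<Rightarrow> (nat \<Rightarrow> nat \<Rightarrow> bool) \<Rightarrow> bool" where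
  "rooted_forest n prec \<longleftrightarrow> strict_poset_on n prec \<and>
     (\<forall>a\<in>{1..n}. \<forall>b c. covers prec a b \<longrightarrow> covers prec a c \<longrightarrow> b = c)"

definition natural_labeling :: "(nat \<Rightarrow> nat \<Rightarrow> bool) \<Rightarrow> bool" where
  "natural_labeling prec \<longleftrightarrow> (\<forall>i j. prec i j \<longrightarrow> i < j)"

text \<open>1-based position of letter a in word pi, i.e. pi^{-1}_a.\<close>
definition pos :: "nat list \<Rightarrow> nat \<Rightarrow> nat" where
  "pos pi a = length (takeWhile (\<lambda>y. y \<noteq> a) pi) + 1"

definition linext :: "nat \<Rightarrow> (nat \<Rightarrow> nat \<Rightarrow> bool) \<Rightarrow> nat list set" where
  "linext n prec = {pi. distinct pi \<and> set pi = {1..n} \<and>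
      (\<forall>i j. prec i j \<longrightarrow> pos pi i < pos pi j)}"

definition comparable :: "(nat \<Rightarrow> nat \<Rightarrow> bool) \<Rightarrow> nat \<Rightarrow> nat \<Rightarrow> bool" where
  "comparable prec a b \<longleftrightarrow> prec a b \<or> prec b a"

text \<open>pi tau_i (1 \<le> i < n): swap positions i, i+1 (1-based) if incomparable.\<close>
definition tau :: "(nat \<Rightarrow> nat \<Rightarrow> bool) \<Rightarrow> nat \<Rightarrow> nat list \<Rightarrow> nat list" where
  "tau prec i pi = (if \<not> comparable prec (pi ! (i - 1)) (pi ! i)
                     then pi[i - 1 := pi ! i, i := pi ! (i - 1)] else pi)"

text \<open>partial_j = tau_j ... tau_{n-1}, acting on the right (tau_j applied first).\<close>
definition bdelta :: "nat \<Rightarrow> (nat \<Rightarrow> nat \<Rightarrow> bool) \<Rightarrow> nat \<Rightarrow> nat list \<Rightarrow> nat list" where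
  "bdelta n prec j pi = foldl (\<lambda>p i. tau prec i p) pi [j..<n]"

definition hbdelta :: "nat \<Rightarrow> (nat \<Rightarrow> nat \<Rightarrow> bool) \<Rightarrow> nat \<Rightarrow> nat list \<Rightarrow> nat list" where
  "hbdelta n prec i pi = bdelta n prec (pos pi i) pi"

text \<open>The monoid generated by the hat-partials (with identity). A map x acts by
  pi \<mapsto> x pi; right-action composition pi(xy) = (pi x) y is y \<circ> x.\<close>
inductive_set hmonoid :: "nat \<Rightarrow> (nat \<Rightarrow> nat \<Rightarrow> bool) \<Rightarrow> (nat list \<Rightarrow> nat list) set"
  for n prec where
  ident: "(\<lambda>pi. pi) \<in> hmonoid n prec"
| step: "x \<in> hmonoid n prec \<Longrightarrow> i \<in> {1..n} \<Longrightarrow> (\<lambda>pi. hbdelta n prec i (x pi)) \<in> hmonoid n prec"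

text \<open>Maps are compared as maps L(P) \<rightarrow> L(P).\<close>
definition idempotent_on :: "nat \<Rightarrow> (nat \<Rightarrow> nat \<Rightarrow> bool) \<Rightarrow> (nat list \<Rightarrow> nat list) \<Rightarrow> bool" where
  "idempotent_on n prec x \<longleftrightarrow> (\<forall>pi\<in>linext n prec. x (x pi) = x pi)"

definition img :: "nat \<Rightarrow> (nat \<Rightarrow> nat \<Rightarrow> bool) \<Rightarrow> (nat list \<Rightarrow> nat list) \<Rightarrow> nat list set" where
  "img n prec x = x ` linext n prec"

definition rfactor :: "nat \<Rightarrow> (nat \<Rightarrow> nat \<Rightarrow> bool) \<Rightarrow> (nat list \<Rightarrow> nat list) \<Rightarrow> nat list" where
  "rfactor n prec x = (THE u. (\<forall>w\<in>img n prec x. suffix u w) \<and>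
      (\<forall>v. (\<forall>w\<in>img n prec x. suffix v w) \<longrightarrow> length v \<le> length u))"

definition Rfactor :: "nat \<Rightarrow> (nat \<Rightarrow> nat \<Rightarrow> bool) \<Rightarrow> (nat list \<Rightarrow> nat list) \<Rightarrow> nat set" where
  "Rfactor n prec x = set (rfactor n prec x)"

text \<open>I_x = {i : hat-partial_i x = x}, i.e. (pi hbdelta_i) x = pi x on L(P).\<close>
definition Ifix :: "nat \<Rightarrow> (nat \<Rightarrow> nat \<Rightarrow> bool) \<Rightarrow> (nat list \<Rightarrow> nat list) \<Rightarrow> nat set" where
  "Ifix n prec x = {i \<in> {1..n}. \<forall>pi\<in>linext n prec. x (hbdelta n prec i pi) = x pi}"

end

theory Submission
  imports Defs
begin


lemma pos_Cons: "pos (x#xs) y = (if y = x then 1 else Suc (pos xs y))"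
  by (auto simp: pos_def)

lemma pos_append: "pos (xs@ys) y = (if y \<in> set xs then pos xs y else length xs + pos ys y)"
  by (induction xs) (auto simp: pos_Cons)

lemma pos_nth: "distinct l \<Longrightarrow> k < length l \<Longrightarrow> pos l (l!k) = Suc k"
proof (induction l arbitrary: k)
  case Nil then show ?case by simp
next
  case (Cons a l)
  then show ?case
    by (cases k) (auto simp: pos_Cons nth_mem)
qed

lemma pos_bounds: "y \<in> set l \<Longrightarrow> 1 \<le> pos l y \<and> pos l y \<le> length l \<and> l ! (pos l y - 1) = y"
  by (induction l) (auto simp: pos_Cons)

lemma pos_ge1: "1 \<le> pos l y"
  by (simp add: pos_def)

lemma linext_length: "\<sigma> \<in> linext n prec \<Longrightarrow> length \<sigma> = n"
  unfolding linext_def using distinct_card by fastforce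

lemma linext_iff:
  assumes sp: "strict_poset_on n prec"
  shows "\<sigma> \<in> linext n prec \<longleftrightarrow> distinct \<sigma> \<and> set \<sigma> = {1..n} \<and>
    (\<forall>k1 k2. k1 < length \<sigma> \<longrightarrow> k2 < length \<sigma> \<longrightarrow> prec (\<sigma>!k1) (\<sigma>!k2) \<longrightarrow> k1 < k2)"
proof
  assume h: "\<sigma> \<in> linext n prec"
  then show "distinct \<sigma> \<and> set \<sigma> = {1..n} \<and>
    (\<forall>k1 k2. k1 < length \<sigma> \<longrightarrow> k2 < length \<sigma> \<longrightarrow> prec (\<sigma>!k1) (\<sigma>!k2) \<longrightarrow> k1 < k2)"
  proof (intro conjI allI impI)
    show "distinct \<sigma>" "set \<sigma> = {1..n}" using h by (auto simp: linext_def)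
    fix k1 k2 assume k: "k1 < length \<sigma>" "k2 < length \<sigma>" "prec (\<sigma>!k1) (\<sigma>!k2)"
    have "pos \<sigma> (\<sigma>!k1) < pos \<sigma> (\<sigma>!k2)" using h k(3) by (simp add: linext_def)
    moreover have "pos \<sigma> (\<sigma>!k1) = Suc k1" "pos \<sigma> (\<sigma>!k2) = Suc k2"
      using pos_nth k h by (auto simp: linext_def)
    ultimately show "k1 < k2" by simp
  qed
next
  assume h: "distinct \<sigma> \<and> set \<sigma> = {1..n} \<and>
    (\<forall>k1 k2. k1 < length \<sigma> \<longrightarrow> k2 < length \<sigma> \<longrightarrow> prec (\<sigma>!k1) (\<sigma>!k2) \<longrightarrow> k1 < k2)"
  have "pos \<sigma> i < pos \<sigma> j" if "prec i j" for i j
  proof -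
    have "i \<in> set \<sigma>" "j \<in> set \<sigma>" using sp that h unfolding strict_poset_on_def by auto
    then have bi: "1 \<le> pos \<sigma> i \<and> pos \<sigma> i \<le> length \<sigma> \<and> \<sigma> ! (pos \<sigma> i - 1) = i"
      and bj: "1 \<le> pos \<sigma> j \<and> pos \<sigma> j \<le> length \<sigma> \<and> \<sigma> ! (pos \<sigma> j - 1) = j"
      using pos_bounds by blast+
    have "pos \<sigma> i - 1 < length \<sigma>" "pos \<sigma> j - 1 < length \<sigma>" using bi bj by auto
    moreover have ord: "\<forall>k1 k2. k1 < length \<sigma> \<longrightarrow> k2 < length \<sigma> \<longrightarrow> prec (\<sigma>!k1) (\<sigma>!k2) \<longrightarrow> k1 < k2"
      using h by blast
    ultimately have "pos \<sigma> i - 1 < pos \<sigma> j - 1" using that bi bj by simp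
    then show ?thesis using bi bj by linarith
  qed
  then show "\<sigma> \<in> linext n prec" using h unfolding linext_def by auto
qed

lemma linext_order:
  assumes "strict_poset_on n prec" "\<sigma> \<in> linext n prec" "k1 < n" "k2 < n" "prec (\<sigma>!k1) (\<sigma>!k2)"
  shows "k1 < k2"
proof -
  have "length \<sigma> = n" using assms(2) by (rule linext_length)
  moreover have "\<forall>k1 k2. k1 < length \<sigma> \<longrightarrow> k2 < length \<sigma> \<longrightarrow> prec (\<sigma>!k1) (\<sigma>!k2) \<longrightarrow> k1 < k2"
    using assms(2) linext_iff[OF assms(1)] by blast
  ultimately show ?thesis using assms(3-5) by simp
qed

lemma linext_distinct: "\<sigma> \<in> linext n prec \<Longrightarrow> distinct \<sigma>"
  and linext_set: "\<sigma> \<in> linext n prec \<Longrightarrow> set \<sigma> = {1..n}"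
  by (auto simp: linext_def)

lemma tau_linext:
  assumes sp: "strict_poset_on n prec" and s: "\<sigma> \<in> linext n prec" and i: "1 \<le> i" "i < n"
  shows "tau prec i \<sigma> \<in> linext n prec"
proof (cases "comparable prec (\<sigma> ! (i - 1)) (\<sigma> ! i)")
  case True then show ?thesis using s by (simp add: tau_def)
next
  case False
  have len: "length \<sigma> = n" using s linext_length by blast
  define \<sigma>' where "\<sigma>' = \<sigma>[i - 1 := \<sigma> ! i, i := \<sigma> ! (i - 1)]"
  have t: "tau prec i \<sigma> = \<sigma>'" using False by (simp add: tau_def \<sigma>'_def)
  have d: "distinct \<sigma>'" using s len i by (simp add: \<sigma>'_def linext_distinct)
  have st: "set \<sigma>' = {1..n}" using s len i by (simp add: \<sigma>'_def linext_set)
  have l': "length \<sigma>' = n" using len by (simp add: \<sigma>'_def)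
  define sw where "sw k = (if k = i - 1 then i else if k = i then i - 1 else k)" for k
  have nth': "\<sigma>' ! k = \<sigma> ! (sw k)" if "k < n" for k
    using that len i by (auto simp: \<sigma>'_def sw_def nth_list_update)
  have "k1 < k2" if "k1 < n" "k2 < n" "prec (\<sigma>'!k1) (\<sigma>'!k2)" for k1 k2
  proof -
    have "sw k1 < n" "sw k2 < n" using that i by (auto simp: sw_def)
    moreover have "prec (\<sigma>!(sw k1)) (\<sigma>!(sw k2))" using nth' that by simp
    ultimately have "sw k1 < sw k2" using linext_order[OF sp s] by blast
    moreover have "\<not> (k1 = i \<and> k2 = i - 1)"
    proof
      assume "k1 = i \<and> k2 = i - 1"
      then have "\<sigma>'!k1 = \<sigma>!(i-1)" "\<sigma>'!k2 = \<sigma>!i" using nth' that i by (auto simp: sw_def)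
      then show False using False that unfolding comparable_def by auto
    qed
    ultimately show ?thesis using i by (auto simp: sw_def split: if_splits)
  qed
  then show ?thesis using t d st l' linext_iff[OF sp] by auto
qed

lemma foldl_tau_linext:
  assumes sp: "strict_poset_on n prec"
  shows "\<sigma> \<in> linext n prec \<Longrightarrow> \<forall>i\<in>set is. 1 \<le> i \<and> i < n \<Longrightarrow> foldl (\<lambda>p i. tau prec i p) \<sigma> is \<in> linext n prec"
proof (induction "is" arbitrary: \<sigma>)
  case Nil then show ?case by simp
next
  case (Cons a l)
  then have "tau prec a \<sigma> \<in> linext n prec" using tau_linext[OF sp] by auto
  then show ?case using Cons by simp
qed

lemma hbdelta_linext:
  assumes sp: "strict_poset_on n prec" "\<sigma> \<in> linext n prec"
  shows "hbdelta n prec i \<sigma> \<in> linext n prec"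
  unfolding hbdelta_def bdelta_def
proof (rule foldl_tau_linext[OF sp(1) sp(2)])
  show "\<forall>i\<in>set [pos \<sigma> i..<n]. 1 \<le> i \<and> i < n" using pos_ge1[of \<sigma> i] by auto
qed

lemma hmonoid_linext:
  assumes sp: "strict_poset_on n prec"
  shows "x \<in> hmonoid n prec \<Longrightarrow> \<sigma> \<in> linext n prec \<Longrightarrow> x \<sigma> \<in> linext n prec"
  by (induction x arbitrary: \<sigma> rule: hmonoid.induct) (auto intro: hbdelta_linext[OF sp])



abbreviation ftau :: "(nat \<Rightarrow> nat \<Rightarrow> bool) \<Rightarrow> nat list \<Rightarrow> nat list \<Rightarrow> nat list" where
  "ftau prec s is \<equiv> foldl (\<lambda>p i. tau prec i p) s is"

lemma tau_length[simp]: "length (tau prec i s) = length s"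
  by (simp add: tau_def)

lemma ftau_length[simp]: "length (ftau prec s is) = length s"
  by (induction "is" arbitrary: s) auto

lemma tau_shift: "length \<alpha> < i \<Longrightarrow> tau prec i (\<alpha> @ w) = \<alpha> @ tau prec (i - length \<alpha>) w"
  unfolding tau_def by (auto simp: nth_append list_update_append)

lemma ftau_shift: "\<forall>i\<in>set is. 1 \<le> i \<Longrightarrow>
   ftau prec (\<alpha> @ w) (map (\<lambda>i. i + length \<alpha>) is) = \<alpha> @ ftau prec w is"
proof (induction "is" arbitrary: w)
  case Nil then show ?case by simp
next
  case (Cons a l)
  have "tau prec (a + length \<alpha>) (\<alpha> @ w) = \<alpha> @ tau prec a w"
    using tau_shift[of \<alpha> "a + length \<alpha>"] Cons.prems by simp
  then show ?case using Cons by simp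
qed

lemma map_add_upt: "map (\<lambda>i. i + m) [a..<b] = [a+m..<b+m]"
  by (induction b) auto

lemma ftau_shift_upt:
  assumes "length \<alpha> < a"
  shows "ftau prec (\<alpha> @ w) [a..<b] = \<alpha> @ ftau prec w [a - length \<alpha>..<b - length \<alpha>]"
proof (cases "a \<le> b")
  case True
  have "[a..<b] = map (\<lambda>i. i + length \<alpha>) [a - length \<alpha>..<b - length \<alpha>]"
    using assms True by (simp add: map_add_upt)
  moreover have "\<forall>i\<in>set [a - length \<alpha>..<b - length \<alpha>]. 1 \<le> i" using assms by auto
  ultimately show ?thesis using ftau_shift by metis
next
  case False then show ?thesis by simp
qed

lemma take_tau: "m \<le> i - 1 \<Longrightarrow> take m (tau prec i s) = take m s"
  by (simp add: tau_def)

lemma take_ftau: "\<forall>i\<in>set is. m \<le> i - 1 \<Longrightarrow> take m (ftau prec s is) = take m s"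
proof (induction "is" arbitrary: s)
  case Nil then show ?case by simp
next
  case (Cons a l)
  then have "take m (ftau prec (tau prec a s) l) = take m (tau prec a s)" by simp
  also have "\<dots> = take m s" using Cons.prems take_tau by simp
  finally show ?case by simp
qed

lemma filter_swap:
  assumes "1 \<le> i" "i < length l" "\<not> P (l ! (i - 1))"
  shows "filter P (l[i - 1 := l ! i, i := l ! (i - 1)]) = filter P l"
proof -
  define a b where "a = l ! (i - 1)" and "b = l ! i"
  have l: "l = take (i - 1) l @ a # b # drop (i + 1) l"
  proof -
    have d1: "drop (i - 1) l = a # drop i l"
      using assms Cons_nth_drop_Suc[of "i - 1" l] unfolding a_def by simp
    have d2: "drop i l = b # drop (i + 1) l"
      using assms Cons_nth_drop_Suc[of i l] unfolding b_def by simp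
    have "l = take (i - 1) l @ drop (i - 1) l" by simp
    also have "\<dots> = take (i - 1) l @ a # b # drop (i + 1) l" using d1 d2 by simp
    finally show ?thesis .
  qed
  have "l[i - 1 := b, i := a] = take (i - 1) l @ b # a # drop (i + 1) l"
    using assms
    by (subst l) (auto simp: list_update_append nth_append)
  then show ?thesis using assms(3) unfolding a_def[symmetric] b_def[symmetric]
    by (subst (2) l) auto
qed



lemma sp_of: "rooted_forest n prec \<Longrightarrow> strict_poset_on n prec"
  by (simp add: rooted_forest_def)

lemma sp_dom: "strict_poset_on n prec \<Longrightarrow> prec a b \<Longrightarrow> a \<in> {1..n} \<and> b \<in> {1..n}"
  and sp_irr: "strict_poset_on n prec \<Longrightarrow> \<not> prec a a"
  and sp_trans: "strict_poset_on n prec \<Longrightarrow> prec a b \<Longrightarrow> prec b c \<Longrightarrow> prec a c"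
  unfolding strict_poset_on_def by blast+

lemma cover_below:
  assumes sp: "strict_poset_on n prec" and nl: "natural_labeling prec" and jy: "prec j y"
  shows "\<exists>c. covers prec j c \<and> (c = y \<or> prec c y)"
proof -
  define Q where "Q c \<longleftrightarrow> prec j c \<and> (c = y \<or> prec c y)" for c
  have Qy: "Q y" using jy by (simp add: Q_def)
  define c where "c = (LEAST c. Q c)"
  have Qc: "Q c" unfolding c_def using Qy by (rule LeastI)
  have "\<not> (\<exists>d. prec j d \<and> prec d c)"
  proof
    assume "\<exists>d. prec j d \<and> prec d c"
    then obtain d where d: "prec j d" "prec d c" by blast
    have "Q d" using d Qc sp_trans[OF sp] by (auto simp: Q_def)
    moreover have "d < c" using nl d(2) by (simp add: natural_labeling_def)
    ultimately show False unfolding c_def using not_less_Least by blast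
  qed
  then show ?thesis using Qc by (auto simp: covers_def Q_def)
qed

lemma forest_chain:
  assumes rf: "rooted_forest n prec" and nl: "natural_labeling prec"
  shows "prec j y \<Longrightarrow> prec j z \<Longrightarrow> y = z \<or> prec y z \<or> prec z y"
proof (induction "n - j" arbitrary: j rule: less_induct)
  case less
  have sp: "strict_poset_on n prec" using rf sp_of by blast
  obtain c1 where c1: "covers prec j c1" "c1 = y \<or> prec c1 y" using cover_below[OF sp nl less(2)] by blast
  obtain c2 where c2: "covers prec j c2" "c2 = z \<or> prec c2 z" using cover_below[OF sp nl less(3)] by blast
  have j: "j \<in> {1..n}" using sp_dom[OF sp less(2)] by blast
  have "c1 = c2" using rf j c1(1) c2(1) unfolding rooted_forest_def by blast
  show ?case
  proof (cases "c1 = y \<or> c2 = z")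
    case True then show ?thesis using c1 c2 \<open>c1 = c2\<close> by auto
  next
    case False
    then have h: "prec c1 y" "prec c1 z" using c1 c2 \<open>c1 = c2\<close> by auto
    have "j < c1" using nl c1(1) by (simp add: natural_labeling_def covers_def)
    moreover have "c1 \<le> n" using sp_dom[OF sp h(1)] by simp
    ultimately have "n - c1 < n - j" by simp
    then show ?thesis using less(1) h by blast
  qed
qed



definition carryinv :: "nat \<Rightarrow> (nat \<Rightarrow> nat \<Rightarrow> bool) \<Rightarrow> nat list \<Rightarrow> nat \<Rightarrow> nat \<Rightarrow> nat list \<Rightarrow> bool" where
  "carryinv n prec \<rho> j k \<sigma> \<longleftrightarrow> \<sigma> \<in> linext n prec \<and>
   (\<forall>q. k \<le> q \<longrightarrow> q < n \<longrightarrow> \<sigma> ! q = \<rho> ! q) \<and>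
   (\<exists>q. pos \<rho> j - 1 \<le> q \<and> q < k \<and> \<sigma> ! (k - 1) = \<rho> ! q) \<and>
   (\<sigma> ! (k - 1) = j \<or> prec j (\<sigma> ! (k - 1))) \<and>
   (\<forall>q. pos \<rho> j - 1 \<le> q \<longrightarrow> q < k \<longrightarrow> (\<rho> ! q = j \<or> prec j (\<rho> ! q)) \<longrightarrow>
        (\<rho> ! q = \<sigma> ! (k - 1) \<or> prec (\<rho> ! q) (\<sigma> ! (k - 1)))) \<and>
   (\<forall>P. (\<forall>y. (y = j \<or> prec j y) \<longrightarrow> \<not> P y) \<longrightarrow> filter P \<sigma> = filter P \<rho>)"

lemma carry:
  assumes rf: "rooted_forest n prec" and nl: "natural_labeling prec"
    and r: "\<rho> \<in> linext n prec" and j: "j \<in> {1..n}" and pk: "pos \<rho> j \<le> k"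
  shows "k \<le> n \<Longrightarrow> carryinv n prec \<rho> j k (ftau prec \<rho> [pos \<rho> j..<k])"
  using pk
proof (induction k rule: dec_induct)
  have sp: "strict_poset_on n prec" using rf sp_of by blast
  have jr: "j \<in> set \<rho>" using j linext_set[OF r] by simp
  have pb: "1 \<le> pos \<rho> j \<and> pos \<rho> j \<le> length \<rho> \<and> \<rho> ! (pos \<rho> j - 1) = j"
    using pos_bounds[OF jr] .
  case base
  have qq: "\<And>q. pos \<rho> j - 1 \<le> q \<Longrightarrow> q < pos \<rho> j \<Longrightarrow> q = pos \<rho> j - 1" by auto
  show ?case unfolding carryinv_def
    using r pb qq by (auto simp del: One_nat_def)
next
  have sp: "strict_poset_on n prec" using rf sp_of by blast
  have jr: "j \<in> set \<rho>" using j linext_set[OF r] by simp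
  have pb: "1 \<le> pos \<rho> j \<and> pos \<rho> j \<le> length \<rho> \<and> \<rho> ! (pos \<rho> j - 1) = j"
    using pos_bounds[OF jr] .
  have len: "length \<rho> = n" using linext_length[OF r] .
  case (step k)
  define p where "p = pos \<rho> j"
  define \<sigma> where "\<sigma> = ftau prec \<rho> [p..<k]"
  have kn: "k < n" using step by simp
  have k1: "1 \<le> k" using step pb p_def by simp
  have I: "carryinv n prec \<rho> j k \<sigma>" using step kn unfolding \<sigma>_def p_def by simp
  have Iu: "\<sigma> \<in> linext n prec \<and>
   (\<forall>q. k \<le> q \<longrightarrow> q < n \<longrightarrow> \<sigma> ! q = \<rho> ! q) \<and>
   (\<exists>q. p - 1 \<le> q \<and> q < k \<and> \<sigma> ! (k - 1) = \<rho> ! q) \<and>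
   (\<sigma> ! (k - 1) = j \<or> prec j (\<sigma> ! (k - 1))) \<and>
   (\<forall>q. p - 1 \<le> q \<longrightarrow> q < k \<longrightarrow> (\<rho> ! q = j \<or> prec j (\<rho> ! q)) \<longrightarrow>
        (\<rho> ! q = \<sigma> ! (k - 1) \<or> prec (\<rho> ! q) (\<sigma> ! (k - 1)))) \<and>
   (\<forall>P. (\<forall>y. (y = j \<or> prec j y) \<longrightarrow> \<not> P y) \<longrightarrow> filter P \<sigma> = filter P \<rho>)"
    using I unfolding carryinv_def p_def .
  define e where "e = \<sigma> ! (k - 1)"
  define b where "b = \<sigma> ! k"
  have sL: "\<sigma> \<in> linext n prec" using Iu by (rule conjunct1)
  have slen: "length \<sigma> = n" using linext_length[OF sL] .
  have unt: "\<forall>q. k \<le> q \<longrightarrow> q < n \<longrightarrow> \<sigma> ! q = \<rho> ! q" using Iu[THEN conjunct2] by (rule conjunct1)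
  have ex0: "\<exists>q. p - 1 \<le> q \<and> q < k \<and> \<sigma> ! (k - 1) = \<rho> ! q"
    using Iu[THEN conjunct2, THEN conjunct2] by (rule conjunct1)
  obtain q0 where q0: "p - 1 \<le> q0" "q0 < k" "\<sigma> ! (k - 1) = \<rho> ! q0"
    using ex0 by blast
  have je: "e = j \<or> prec j e" unfolding e_def
    using Iu[THEN conjunct2, THEN conjunct2, THEN conjunct2] by (rule conjunct1)
  have mx: "\<forall>q. p - 1 \<le> q \<longrightarrow> q < k \<longrightarrow> (\<rho> ! q = j \<or> prec j (\<rho> ! q)) \<longrightarrow>
        (\<rho> ! q = e \<or> prec (\<rho> ! q) e)" unfolding e_def
    using Iu[THEN conjunct2, THEN conjunct2, THEN conjunct2, THEN conjunct2] by (rule conjunct1)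
  have filt: "\<forall>P. (\<forall>y. (y = j \<or> prec j y) \<longrightarrow> \<not> P y) \<longrightarrow> filter P \<sigma> = filter P \<rho>"
    using Iu[THEN conjunct2, THEN conjunct2, THEN conjunct2, THEN conjunct2] by (rule conjunct2)
  have b: "b = \<rho> ! k" using unt kn b_def by simp
  have nbe: "\<not> prec b e"
  proof
    assume "prec b e"
    then have "prec (\<rho> ! k) (\<rho> ! q0)" using b q0 e_def by simp
    then have "k < q0" using linext_order[OF sp r kn] q0 kn by simp
    then show False using q0 by simp
  qed
  have ssplit: "ftau prec \<rho> [p..<Suc k] = tau prec k \<sigma>"
    using step(1) unfolding \<sigma>_def p_def by simp
  have \<sigma>'L: "tau prec k \<sigma> \<in> linext n prec" using tau_linext[OF sp sL k1 kn] .
  show ?case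
  proof (cases "prec e b")
    case True
    then have t: "tau prec k \<sigma> = \<sigma>" unfolding tau_def comparable_def e_def b_def by simp
    have jb: "prec j b" using je True sp_trans[OF sp] by blast
    show ?thesis unfolding carryinv_def ssplit[unfolded p_def] t
    proof (intro conjI)
      show "\<sigma> \<in> linext n prec" by (rule sL)
      show "\<forall>q. Suc k \<le> q \<longrightarrow> q < n \<longrightarrow> \<sigma> ! q = \<rho> ! q" using unt by simp
      show "\<exists>q. pos \<rho> j - 1 \<le> q \<and> q < Suc k \<and> \<sigma> ! (Suc k - 1) = \<rho> ! q"
        using b b_def q0 p_def by (intro exI[of _ k]) auto
      show "\<sigma> ! (Suc k - 1) = j \<or> prec j (\<sigma> ! (Suc k - 1))" using jb b_def by simp
      show "\<forall>q. pos \<rho> j - 1 \<le> q \<longrightarrow> q < Suc k \<longrightarrow> (\<rho> ! q = j \<or> prec j (\<rho> ! q)) \<longrightarrow>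
        (\<rho> ! q = \<sigma> ! (Suc k - 1) \<or> prec (\<rho> ! q) (\<sigma> ! (Suc k - 1)))"
      proof (intro allI impI)
        fix q assume h: "pos \<rho> j - 1 \<le> q" "q < Suc k" "\<rho> ! q = j \<or> prec j (\<rho> ! q)"
        show "\<rho> ! q = \<sigma> ! (Suc k - 1) \<or> prec (\<rho> ! q) (\<sigma> ! (Suc k - 1))"
        proof (cases "q = k")
          case True then show ?thesis using b b_def by simp
        next
          case False
          then have "q < k" using h by simp
          then have "\<rho> ! q = e \<or> prec (\<rho> ! q) e" using mx h(1,3) p_def by blast
          then show ?thesis using True b_def sp_trans[OF sp] by auto
        qed
      qed
      show "\<forall>P. (\<forall>y. (y = j \<or> prec j y) \<longrightarrow> \<not> P y) \<longrightarrow> filter P \<sigma> = filter P \<rho>"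
        by (rule filt)
    qed
  next
    case False
    have inc: "\<not> comparable prec (\<sigma> ! (k - 1)) (\<sigma> ! k)"
      using False nbe unfolding comparable_def e_def b_def by blast
    define \<sigma>' where "\<sigma>' = \<sigma>[k - 1 := \<sigma> ! k, k := \<sigma> ! (k - 1)]"
    have t: "tau prec k \<sigma> = \<sigma>'" using inc unfolding tau_def \<sigma>'_def by simp
    have s'k: "\<sigma>' ! k = e" using slen kn unfolding \<sigma>'_def e_def by simp
    have s'q: "\<sigma>' ! q = \<sigma> ! q" if "Suc k \<le> q" for q
      using that unfolding \<sigma>'_def by simp
    show ?thesis unfolding carryinv_def ssplit[unfolded p_def] t
    proof (intro conjI)
      show "\<sigma>' \<in> linext n prec" using \<sigma>'L t by simp
      show "\<forall>q. Suc k \<le> q \<longrightarrow> q < n \<longrightarrow> \<sigma>' ! q = \<rho> ! q" using unt s'q by simp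
      show "\<exists>q. pos \<rho> j - 1 \<le> q \<and> q < Suc k \<and> \<sigma>' ! (Suc k - 1) = \<rho> ! q"
        using q0 s'k e_def p_def by (intro exI[of _ q0]) auto
      show "\<sigma>' ! (Suc k - 1) = j \<or> prec j (\<sigma>' ! (Suc k - 1))" using je s'k by simp
      show "\<forall>q. pos \<rho> j - 1 \<le> q \<longrightarrow> q < Suc k \<longrightarrow> (\<rho> ! q = j \<or> prec j (\<rho> ! q)) \<longrightarrow>
        (\<rho> ! q = \<sigma>' ! (Suc k - 1) \<or> prec (\<rho> ! q) (\<sigma>' ! (Suc k - 1)))"
      proof (intro allI impI)
        fix q assume h: "pos \<rho> j - 1 \<le> q" "q < Suc k" "\<rho> ! q = j \<or> prec j (\<rho> ! q)"
        show "\<rho> ! q = \<sigma>' ! (Suc k - 1) \<or> prec (\<rho> ! q) (\<sigma>' ! (Suc k - 1))"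
        proof (cases "q = k")
          case False
          then have "q < k" using h by simp
          then have "\<rho> ! q = e \<or> prec (\<rho> ! q) e" using mx h(1,3) p_def by blast
          then show ?thesis using s'k by simp
        next
          case True
          then have jb: "b = j \<or> prec j b" using h b by simp
          have "b = e \<or> prec b e"
          proof (cases "b = j")
            case True
            have "e \<noteq> b"
            proof
              assume "e = b"
              then have "\<sigma> ! (k - 1) = \<sigma> ! k" using e_def b_def by simp
              moreover have "k - 1 \<noteq> k" using k1 by simp
              moreover have "k - 1 < length \<sigma>" "k < length \<sigma>" using slen kn by auto
              ultimately show False using nth_eq_iff_index_eq[OF linext_distinct[OF sL]] by blast
            qed
            then show ?thesis using je True by simp
          next
            case bj: False
            then have pjb: "prec j b" using jb by simp
            show ?thesis
            proof (cases "e = j")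
              case True then show ?thesis using pjb False by simp
            next
              case ej: False
              then have "prec j e" using je by simp
              then show ?thesis using forest_chain[OF rf nl pjb] False by blast
            qed
          qed
          then show ?thesis using True b s'k by simp
        qed
      qed
      show "\<forall>P. (\<forall>y. (y = j \<or> prec j y) \<longrightarrow> \<not> P y) \<longrightarrow> filter P \<sigma>' = filter P \<rho>"
      proof (intro allI impI)
        fix P assume hP: "\<forall>y. (y = j \<or> prec j y) \<longrightarrow> \<not> P y"
        have "\<not> P (\<sigma> ! (k - 1))" using hP je e_def by blast
        then have "filter P \<sigma>' = filter P \<sigma>" unfolding \<sigma>'_def
          using filter_swap[OF k1, of \<sigma> P] slen kn by simp
        then show "filter P \<sigma>' = filter P \<rho>" using filt hP by simp
      qed
    qed
  qed
qed



lemma upt_split3: "p \<le> k \<Longrightarrow> k \<le> n \<Longrightarrow> [p..<n] = [p..<k] @ [k..<n]"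
  by (metis le_add_diff_inverse upt_add_eq_append)

lemma linext_app_disj:
  assumes "\<rho> \<in> linext n prec" "\<rho> = \<alpha> @ w"
  shows "set \<alpha> \<inter> set w = {}" "distinct \<alpha>" "distinct w"
  using linext_distinct[OF assms(1)] assms(2) by auto

lemma G1:
  assumes sp: "strict_poset_on n prec" and r: "\<rho> \<in> linext n prec" and rw: "\<rho> = \<alpha> @ w"
    and jw: "j \<in> set w"
  shows "hbdelta n prec j \<rho> = \<alpha> @ ftau prec w [pos w j..<length w]"
proof -
  have "j \<notin> set \<alpha>" using linext_app_disj[OF r rw] jw by blast
  then have p: "pos \<rho> j = length \<alpha> + pos w j" using rw by (simp add: pos_append)
  have len: "length \<rho> = n" using linext_length[OF r] .
  have "length \<alpha> < pos \<rho> j" using p pos_ge1[of w j] by simp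
  then have "ftau prec (\<alpha> @ w) [pos \<rho> j..<n] = \<alpha> @ ftau prec w [pos \<rho> j - length \<alpha>..<n - length \<alpha>]"
    by (rule ftau_shift_upt)
  moreover have "n - length \<alpha> = length w" using len rw by simp
  ultimately show ?thesis using p rw unfolding hbdelta_def bdelta_def by simp
qed

lemma G2:
  assumes rf: "rooted_forest n prec" and nl: "natural_labeling prec"
    and r: "\<rho> \<in> linext n prec" and rw: "\<rho> = \<alpha> @ w"
    and j: "j \<in> {1..n}" and jw: "j \<notin> set w"
  shows "\<exists>\<beta> e. hbdelta n prec j \<rho> = \<beta> @ ftau prec (e # w) [1..<Suc (length w)] \<and>
     e \<notin> set w \<and> (e = j \<or> prec j e) \<and>
     (\<forall>y. (y = j \<or> prec j y) \<longrightarrow> y \<notin> set w \<longrightarrow> y = e \<or> prec y e)"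
proof -
  have sp: "strict_poset_on n prec" using rf sp_of by blast
  have len: "length \<rho> = n" using linext_length[OF r] .
  have dis: "set \<alpha> \<inter> set w = {}" using linext_app_disj[OF r rw] by blast
  have jr: "j \<in> set \<rho>" using j linext_set[OF r] by simp
  then have ja: "j \<in> set \<alpha>" using jw rw by simp
  define k where "k = length \<alpha>"
  define p where "p = pos \<rho> j"
  have pa: "p = pos \<alpha> j" using ja rw p_def by (simp add: pos_append)
  have pk: "p \<le> k" using pos_bounds[OF ja] pa k_def by simp
  have k1: "1 \<le> k" using pk pos_ge1[of \<rho> j] p_def by simp
  have kn: "k \<le> n" using len rw k_def by simp
  define \<sigma> where "\<sigma> = ftau prec \<rho> [p..<k]"
  have I: "carryinv n prec \<rho> j k \<sigma>" unfolding \<sigma>_def p_def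
    using carry[OF rf nl r j] pk kn p_def by simp
  have sL: "\<sigma> \<in> linext n prec" using I unfolding carryinv_def by (rule conjunct1)
  have unt: "\<forall>q. k \<le> q \<longrightarrow> q < n \<longrightarrow> \<sigma> ! q = \<rho> ! q"
    using I unfolding carryinv_def by (rule conjunct2[THEN conjunct1])
  have ex0: "\<exists>q. pos \<rho> j - 1 \<le> q \<and> q < k \<and> \<sigma> ! (k - 1) = \<rho> ! q"
    using I unfolding carryinv_def by (rule conjunct2[THEN conjunct2, THEN conjunct1])
  have je: "\<sigma> ! (k - 1) = j \<or> prec j (\<sigma> ! (k - 1))"
    using I unfolding carryinv_def by (rule conjunct2[THEN conjunct2, THEN conjunct2, THEN conjunct1])
  have mx: "\<forall>q. pos \<rho> j - 1 \<le> q \<longrightarrow> q < k \<longrightarrow> (\<rho> ! q = j \<or> prec j (\<rho> ! q)) \<longrightarrow>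
        (\<rho> ! q = \<sigma> ! (k - 1) \<or> prec (\<rho> ! q) (\<sigma> ! (k - 1)))"
    using I unfolding carryinv_def by (rule conjunct2[THEN conjunct2, THEN conjunct2, THEN conjunct2, THEN conjunct1])
  define e where "e = \<sigma> ! (k - 1)"
  have slen: "length \<sigma> = n" using linext_length[OF sL] .
  have dw: "drop k \<sigma> = w"
  proof (rule nth_equalityI)
    show "length (drop k \<sigma>) = length w" using slen len rw k_def by simp
    fix i assume "i < length (drop k \<sigma>)"
    then have "k + i < n" using slen by simp
    then show "drop k \<sigma> ! i = w ! i" using unt rw k_def slen by (simp add: nth_append)
  qed
  have sdec: "\<sigma> = take (k - 1) \<sigma> @ e # w"
  proof -
    have "drop (k - 1) \<sigma> = \<sigma> ! (k - 1) # drop k \<sigma>"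
      using Cons_nth_drop_Suc[of "k - 1" \<sigma>] k1 kn slen by simp
    then show ?thesis using dw e_def append_take_drop_id[of "k - 1" \<sigma>] by simp
  qed
  have "hbdelta n prec j \<rho> = ftau prec \<rho> [p..<n]" unfolding hbdelta_def bdelta_def p_def by simp
  also have "\<dots> = ftau prec \<sigma> [k..<n]" unfolding \<sigma>_def using upt_split3[OF pk kn] by simp
  also have "\<dots> = ftau prec (take (k - 1) \<sigma> @ e # w) [k..<n]" using sdec by simp
  also have "\<dots> = take (k - 1) \<sigma> @ ftau prec (e # w) [k - length (take (k - 1) \<sigma>)..<n - length (take (k - 1) \<sigma>)]"
    by (rule ftau_shift_upt) (use k1 in simp)
  also have "\<dots> = take (k - 1) \<sigma> @ ftau prec (e # w) [1..<Suc (length w)]"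
  proof -
    have "length (take (k - 1) \<sigma>) = k - 1" using slen kn k1 by simp
    moreover have "n - (k - 1) = Suc (length w)" using len rw k_def k1 by simp
    ultimately show ?thesis using k1 by simp
  qed
  finally have hb: "hbdelta n prec j \<rho> = take (k - 1) \<sigma> @ ftau prec (e # w) [1..<Suc (length w)]" .
  obtain q0 where q0: "q0 < k" "e = \<rho> ! q0" using ex0 e_def by blast
  have "e \<in> set \<alpha>" using q0 rw k_def by (simp add: nth_append)
  then have ew: "e \<notin> set w" using dis by blast
  have mxe: "\<forall>y. (y = j \<or> prec j y) \<longrightarrow> y \<notin> set w \<longrightarrow> y = e \<or> prec y e"
  proof (intro allI impI)
    fix y assume jy: "y = j \<or> prec j y" and yw: "y \<notin> set w"
    have "y \<in> {1..n}" using jy j sp_dom[OF sp] by blast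
    then have yr: "y \<in> set \<rho>" using linext_set[OF r] by simp
    then have ya: "y \<in> set \<alpha>" using yw rw by simp
    define q where "q = pos \<rho> y - 1"
    have pby: "1 \<le> pos \<rho> y \<and> pos \<rho> y \<le> length \<rho> \<and> \<rho> ! (pos \<rho> y - 1) = y" using pos_bounds[OF yr] .
    have qy: "\<rho> ! q = y" using pby q_def by simp
    have "pos \<rho> y = pos \<alpha> y" using ya rw by (simp add: pos_append)
    moreover have "1 \<le> pos \<alpha> y" "pos \<alpha> y \<le> length \<alpha>" using pos_bounds[OF ya] by auto
    ultimately have qk: "q < k" using q_def k_def by linarith
    have "pos \<rho> j \<le> pos \<rho> y"
    proof (cases "y = j")
      case False
      then have "prec j y" using jy by simp
      then show ?thesis using r unfolding linext_def by fastforce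
    qed simp
    then have "pos \<rho> j - 1 \<le> q" using q_def by simp
    then show "y = e \<or> prec y e" using mx qk jy qy e_def by metis
  qed
  show ?thesis using hb ew je mxe e_def by blast
qed

lemma G_both:
  assumes rf: "rooted_forest n prec" and nl: "natural_labeling prec"
    and r: "\<rho> \<in> linext n prec" and rw: "\<rho> = \<alpha> @ w"
    and r': "\<rho>' \<in> linext n prec" and rw': "\<rho>' = \<alpha>' @ w"
    and j: "j \<in> {1..n}"
  shows "(j \<in> set w \<longrightarrow> (\<exists>W. hbdelta n prec j \<rho> = \<alpha> @ W \<and> hbdelta n prec j \<rho>' = \<alpha>' @ W))
     \<and> (j \<notin> set w \<longrightarrow> (\<exists>W. suffix W (hbdelta n prec j \<rho>) \<and> suffix W (hbdelta n prec j \<rho>') \<and> length W = Suc (length w)))"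
proof (intro conjI impI)
  have sp: "strict_poset_on n prec" using rf sp_of by blast
  assume "j \<in> set w"
  then show "\<exists>W. hbdelta n prec j \<rho> = \<alpha> @ W \<and> hbdelta n prec j \<rho>' = \<alpha>' @ W"
    using G1[OF sp r rw] G1[OF sp r' rw'] by blast
next
  have sp: "strict_poset_on n prec" using rf sp_of by blast
  assume jw: "j \<notin> set w"
  obtain \<beta> e where e: "hbdelta n prec j \<rho> = \<beta> @ ftau prec (e # w) [1..<Suc (length w)]"
     "e \<notin> set w" "e = j \<or> prec j e"
     "\<forall>y. (y = j \<or> prec j y) \<longrightarrow> y \<notin> set w \<longrightarrow> y = e \<or> prec y e"
    using G2[OF rf nl r rw j jw] by blast
  obtain \<beta>' e' where e': "hbdelta n prec j \<rho>' = \<beta>' @ ftau prec (e' # w) [1..<Suc (length w)]"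
     "e' \<notin> set w" "e' = j \<or> prec j e'"
     "\<forall>y. (y = j \<or> prec j y) \<longrightarrow> y \<notin> set w \<longrightarrow> y = e' \<or> prec y e'"
    using G2[OF rf nl r' rw' j jw] by blast
  have "e = e'"
  proof (rule ccontr)
    assume ne: "e \<noteq> e'"
    have "prec e e'" using e'(4) e(2,3) ne by blast
    moreover have "prec e' e" using e(4) e'(2,3) ne by blast
    ultimately show False using sp_trans[OF sp] sp_irr[OF sp] by blast
  qed
  then show "\<exists>W. suffix W (hbdelta n prec j \<rho>) \<and> suffix W (hbdelta n prec j \<rho>') \<and> length W = Suc (length w)"
    using e(1) e'(1) by (intro exI[of _ "ftau prec (e # w) [1..<Suc (length w)]"]) (auto simp: suffix_def)
qed



lemma filt_hb:
  assumes rf: "rooted_forest n prec" and nl: "natural_labeling prec"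
    and r: "\<rho> \<in> linext n prec" and i: "i \<in> {1..n}"
    and P: "\<forall>y. (y = i \<or> prec i y) \<longrightarrow> \<not> P y"
  shows "filter P (hbdelta n prec i \<rho>) = filter P \<rho>"
proof -
  have ir: "i \<in> set \<rho>" using i linext_set[OF r] by simp
  have "pos \<rho> i \<le> n" using pos_bounds[OF ir] linext_length[OF r] by simp
  then have I: "carryinv n prec \<rho> i n (ftau prec \<rho> [pos \<rho> i..<n])"
    using carry[OF rf nl r i] by simp
  have "\<forall>P. (\<forall>y. (y = i \<or> prec i y) \<longrightarrow> \<not> P y) \<longrightarrow> filter P (ftau prec \<rho> [pos \<rho> i..<n]) = filter P \<rho>"
    using I unfolding carryinv_def by (rule conjunct2[THEN conjunct2, THEN conjunct2, THEN conjunct2, THEN conjunct2])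
  then show ?thesis using P unfolding hbdelta_def bdelta_def by blast
qed

lemma G0:
  assumes rf: "rooted_forest n prec" and nl: "natural_labeling prec"
    and r: "\<rho> \<in> linext n prec" and rw: "\<rho> = \<alpha> @ w"
    and r': "\<rho>' \<in> linext n prec" and rw': "\<rho>' = \<alpha>' @ w"
    and j: "j \<in> {1..n}"
  shows "\<exists>W. suffix W (hbdelta n prec j \<rho>) \<and> suffix W (hbdelta n prec j \<rho>') \<and> length w \<le> length W"
proof (cases "j \<in> set w")
  case True
  have sp: "strict_poset_on n prec" using rf sp_of by blast
  obtain W where W: "hbdelta n prec j \<rho> = \<alpha> @ W" "hbdelta n prec j \<rho>' = \<alpha>' @ W"
    using conjunct1[OF G_both[OF rf nl r rw r' rw' j], rule_format, OF True] by blast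
  have "length (hbdelta n prec j \<rho>) = n" using linext_length[OF hbdelta_linext[OF sp r]] .
  moreover have "length \<rho> = n" using linext_length[OF r] .
  ultimately have "length W = length w" using W rw by simp
  then show ?thesis using W by (auto simp: suffix_def)
next
  case False
  obtain W where "suffix W (hbdelta n prec j \<rho>)" "suffix W (hbdelta n prec j \<rho>')" "length W = Suc (length w)"
    using conjunct2[OF G_both[OF rf nl r rw r' rw' j], rule_format, OF False] by blast
  then show ?thesis by (intro exI[of _ W]) simp
qed

lemma set_suffix_eq:
  assumes "\<rho> \<in> linext n prec" "\<rho> = \<alpha> @ w" "\<rho>' \<in> linext n prec" "\<rho>' = \<alpha> @ W"
  shows "set W = set w"
proof -
  have "set W = {1..n} - set \<alpha>" using linext_app_disj[OF assms(3,4)] linext_set[OF assms(3)] assms(4) by auto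
  moreover have "set w = {1..n} - set \<alpha>" using linext_app_disj[OF assms(1,2)] linext_set[OF assms(1)] assms(2) by auto
  ultimately show ?thesis by simp
qed

definition Qprop where
  "Qprop n prec T x \<longleftrightarrow> (\<forall>\<pi>\<in>linext n prec. filter (\<lambda>y. y \<notin> T) (x \<pi>) = filter (\<lambda>y. y \<notin> T) \<pi>) \<and>
   (\<forall>\<rho> \<rho>' \<alpha> \<alpha>' w. \<rho> \<in> linext n prec \<longrightarrow> \<rho>' \<in> linext n prec \<longrightarrow> \<rho> = \<alpha> @ w \<longrightarrow> \<rho>' = \<alpha>' @ w \<longrightarrow>
      set w = T \<longrightarrow> (\<exists>W. x \<rho> = \<alpha> @ W \<and> x \<rho>' = \<alpha>' @ W))"

definition Gprop where
  "Gprop n prec T x \<longleftrightarrow> (\<forall>\<rho> \<rho>' \<alpha> \<alpha>' w. \<rho> \<in> linext n prec \<longrightarrow> \<rho>' \<in> linext n prec \<longrightarrow> \<rho> = \<alpha> @ w \<longrightarrow> \<rho>' = \<alpha>' @ w \<longrightarrow>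
      set w = T \<longrightarrow> (\<exists>W. suffix W (x \<rho>) \<and> suffix W (x \<rho>') \<and> length w < length W))"

lemma H:
  assumes rf: "rooted_forest n prec" and nl: "natural_labeling prec"
    and up: "\<forall>y z. y \<in> T \<longrightarrow> prec y z \<longrightarrow> z \<in> T"
  shows "x \<in> hmonoid n prec \<Longrightarrow> Qprop n prec T x \<or> Gprop n prec T x"
proof (induction x rule: hmonoid.induct)
  case ident
  have "Qprop n prec T (\<lambda>pi. pi)" unfolding Qprop_def by simp
  then show ?case by (rule disjI1)
next
  case (step x i)
  have sp: "strict_poset_on n prec" using rf sp_of by blast
  have xL: "\<And>\<sigma>. \<sigma> \<in> linext n prec \<Longrightarrow> x \<sigma> \<in> linext n prec" using hmonoid_linext[OF sp step(1)] .
  show ?case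
  proof (cases "Qprop n prec T x")
    case Q: True
    show ?thesis
    proof (cases "i \<in> T")
      case True
      have "Qprop n prec T (\<lambda>pi. hbdelta n prec i (x pi))"
        unfolding Qprop_def
      proof (intro conjI ballI allI impI)
        fix \<pi> assume \<pi>: "\<pi> \<in> linext n prec"
        have hP: "\<forall>y. (y = i \<or> prec i y) \<longrightarrow> \<not> (\<lambda>y. y \<notin> T) y" using True up by blast
        have "filter (\<lambda>y. y \<notin> T) (hbdelta n prec i (x \<pi>)) = filter (\<lambda>y. y \<notin> T) (x \<pi>)"
          by (rule filt_hb[OF rf nl xL[OF \<pi>] step(2) hP])
        then show "filter (\<lambda>y. y \<notin> T) (hbdelta n prec i (x \<pi>)) = filter (\<lambda>y. y \<notin> T) \<pi>"
          using Q[unfolded Qprop_def, THEN conjunct1, rule_format, OF \<pi>] by simp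
      next
        fix \<rho> \<rho>' \<alpha> \<alpha>' w
        assume h: "\<rho> \<in> linext n prec" "\<rho>' \<in> linext n prec" "\<rho> = \<alpha> @ w" "\<rho>' = \<alpha>' @ w" "set w = T"
        obtain W where W: "x \<rho> = \<alpha> @ W" "x \<rho>' = \<alpha>' @ W" using Q[unfolded Qprop_def, THEN conjunct2, rule_format, OF h] by blast
        have sW: "set W = T" using set_suffix_eq[OF h(1,3) xL[OF h(1)] W(1)] h(5) by simp
        show "\<exists>W. hbdelta n prec i (x \<rho>) = \<alpha> @ W \<and> hbdelta n prec i (x \<rho>') = \<alpha>' @ W"
          using conjunct1[OF G_both[OF rf nl xL[OF h(1)] W(1) xL[OF h(2)] W(2) step(2)], rule_format] sW True by blast
      qed
      then show ?thesis by blast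
    next
      case False
      have "Gprop n prec T (\<lambda>pi. hbdelta n prec i (x pi))"
        unfolding Gprop_def
      proof (intro allI impI)
        fix \<rho> \<rho>' \<alpha> \<alpha>' w
        assume h: "\<rho> \<in> linext n prec" "\<rho>' \<in> linext n prec" "\<rho> = \<alpha> @ w" "\<rho>' = \<alpha>' @ w" "set w = T"
        obtain W where W: "x \<rho> = \<alpha> @ W" "x \<rho>' = \<alpha>' @ W" using Q[unfolded Qprop_def, THEN conjunct2, rule_format, OF h] by blast
        have sW: "set W = T" using set_suffix_eq[OF h(1,3) xL[OF h(1)] W(1)] h(5) by simp
        have "length (x \<rho>) = n" using linext_length[OF xL[OF h(1)]] .
        moreover have "length \<rho> = n" using linext_length[OF h(1)] .
        ultimately have lW: "length W = length w" using W h(3) by simp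
        obtain W' where "suffix W' (hbdelta n prec i (x \<rho>))" "suffix W' (hbdelta n prec i (x \<rho>'))"
          "length W' = Suc (length W)"
          using conjunct2[OF G_both[OF rf nl xL[OF h(1)] W(1) xL[OF h(2)] W(2) step(2)], rule_format] sW False by blast
        then show "\<exists>W. suffix W (hbdelta n prec i (x \<rho>)) \<and> suffix W (hbdelta n prec i (x \<rho>')) \<and> length w < length W"
          using lW by (intro exI[of _ W']) simp
      qed
      then show ?thesis by blast
    qed
  next
    case False
    then have G: "Gprop n prec T x" using step(3) by blast
    have "Gprop n prec T (\<lambda>pi. hbdelta n prec i (x pi))"
      unfolding Gprop_def
    proof (intro allI impI)
      fix \<rho> \<rho>' \<alpha> \<alpha>' w
      assume h: "\<rho> \<in> linext n prec" "\<rho>' \<in> linext n prec" "\<rho> = \<alpha> @ w" "\<rho>' = \<alpha>' @ w" "set w = T"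
      obtain W where W: "suffix W (x \<rho>)" "suffix W (x \<rho>')" "length w < length W"
        using G[unfolded Gprop_def, rule_format, OF h] by blast
      obtain \<beta> \<beta>' where B: "x \<rho> = \<beta> @ W" "x \<rho>' = \<beta>' @ W" using W(1,2) by (auto simp: suffix_def)
      obtain W' where "suffix W' (hbdelta n prec i (x \<rho>))" "suffix W' (hbdelta n prec i (x \<rho>'))"
          "length W \<le> length W'"
        using G0[OF rf nl xL[OF h(1)] B(1) xL[OF h(2)] B(2) step(2)] by blast
      then show "\<exists>W. suffix W (hbdelta n prec i (x \<rho>)) \<and> suffix W (hbdelta n prec i (x \<rho>')) \<and> length w < length W"
        using W(3) by (intro exI[of _ W']) simp
    qed
    then show ?thesis by blast
  qed
qed



lemma upt_linext:
  assumes sp: "strict_poset_on n prec" and nl: "natural_labeling prec"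
  shows "[1..<Suc n] \<in> linext n prec"
proof -
  have "\<forall>k1 k2. k1 < length [1..<Suc n] \<longrightarrow> k2 < length [1..<Suc n] \<longrightarrow>
      prec ([1..<Suc n] ! k1) ([1..<Suc n] ! k2) \<longrightarrow> k1 < k2"
  proof (intro allI impI)
    fix k1 k2 assume h: "k1 < length [1..<Suc n]" "k2 < length [1..<Suc n]"
      "prec ([1..<Suc n] ! k1) ([1..<Suc n] ! k2)"
    then have "prec (Suc k1) (Suc k2)" by (simp del: upt_Suc)
    then have "Suc k1 < Suc k2" using nl unfolding natural_labeling_def by blast
    then show "k1 < k2" by simp
  qed
  moreover have "distinct [1..<Suc n]" "set [1..<Suc n] = {1..n}" by (simp_all del: upt_Suc) auto
  ultimately show ?thesis unfolding linext_iff[OF sp] by blast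
qed

lemma suffix_len: "suffix v w \<Longrightarrow> length v \<le> length w"
  by (auto simp: suffix_def)

lemma rfactor_props:
  assumes ne: "img n prec x \<noteq> {}" and len: "\<forall>w\<in>img n prec x. length w = n"
  shows "(\<forall>w\<in>img n prec x. suffix (rfactor n prec x) w) \<and>
         (\<forall>v. (\<forall>w\<in>img n prec x. suffix v w) \<longrightarrow> length v \<le> length (rfactor n prec x))"
proof -
  define C where "C v \<longleftrightarrow> (\<forall>w\<in>img n prec x. suffix v w)" for v
  obtain w0 where w0: "w0 \<in> img n prec x" using ne by blast
  have "C []" by (simp add: C_def)
  moreover have "\<forall>v. C v \<longrightarrow> length v < Suc n"
  proof (intro allI impI)
    fix v assume "C v"
    then have "suffix v w0" using w0 unfolding C_def by blast
    then have "length v \<le> length w0" by (rule suffix_len)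
    then show "length v < Suc n" using len w0 by simp
  qed
  ultimately obtain u where u: "C u" "\<forall>v. C v \<longrightarrow> length v \<le> length u"
    using ex_has_greatest_nat[of C "[]" length "Suc n"] by blast
  have "rfactor n prec x = u" unfolding rfactor_def
  proof (rule the_equality)
    show "(\<forall>w\<in>img n prec x. suffix u w) \<and> (\<forall>v. (\<forall>w\<in>img n prec x. suffix v w) \<longrightarrow> length v \<le> length u)"
      using u unfolding C_def by blast
  next
    fix u' assume h: "(\<forall>w\<in>img n prec x. suffix u' w) \<and> (\<forall>v. (\<forall>w\<in>img n prec x. suffix v w) \<longrightarrow> length v \<le> length u')"
    have l1: "length u \<le> length u'" using h u(1) unfolding C_def by blast
    have l2: "length u' \<le> length u" using u(2) h unfolding C_def by blast
    have s1: "suffix u' w0" "suffix u w0" using h u w0 unfolding C_def by auto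
    have "suffix u' u" using suffix_length_suffix[OF s1(1) s1(2)] l2 by simp
    moreover have "suffix u u'" using suffix_length_suffix[OF s1(2) s1(1)] l1 by simp
    ultimately have "suffix u' u" "suffix u u'" by simp_all
    then show "u' = u" using suffix_order.antisym by blast
  qed
  then show ?thesis using u unfolding C_def by simp
qed

lemma sorted_pos:
  "sorted l \<Longrightarrow> distinct l \<Longrightarrow> y \<in> set l \<Longrightarrow> z \<in> set l \<Longrightarrow> y < z \<Longrightarrow> pos l y < pos l z"
proof (induction l)
  case Nil then show ?case by simp
next
  case (Cons a l)
  show ?case
  proof (cases "y = a")
    case True
    then have "z \<noteq> a" using Cons by simp
    then show ?thesis using True pos_ge1[of l z] by (simp add: pos_Cons)
  next
    case False
    then have yl: "y \<in> set l" using Cons by simp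
    then have "a \<le> y" using Cons.prems(1) by simp
    then have "z \<noteq> a" using Cons.prems(5) by auto
    then have "z \<in> set l" using Cons by simp
    then show ?thesis using Cons yl False \<open>z \<noteq> a\<close> by (simp add: pos_Cons)
  qed
qed

lemma last_filter_pos:
  "distinct l \<Longrightarrow> z \<in> set l \<Longrightarrow> P z \<Longrightarrow> z \<noteq> last (filter P l) \<Longrightarrow>
   pos l z < pos l (last (filter P l))"
proof (induction l)
  case Nil then show ?case by simp
next
  case (Cons x xs)
  show ?case
  proof (cases "filter P xs = []")
    case True
    then have "z \<notin> set xs" using Cons.prems(3) by (metis filter_empty_conv)
    then have "z = x" using Cons.prems(2) by simp
    then show ?thesis using Cons.prems True by simp
  next
    case False
    define b where "b = last (filter P xs)"
    have lb: "last (filter P (x # xs)) = b" using False b_def by simp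
    have "b \<in> set (filter P xs)" unfolding b_def by (rule last_in_set[OF False])
    then have bxs: "b \<in> set xs" by simp
    then have bx: "b \<noteq> x" using Cons.prems(1) by auto
    show ?thesis
    proof (cases "z = x")
      case True then show ?thesis using lb bx pos_ge1[of xs b] by (simp add: pos_Cons)
    next
      case False
      then have "z \<in> set xs" using Cons.prems(2) by simp
      moreover have "z \<noteq> b" using Cons.prems(4) lb by simp
      ultimately have "pos xs z < pos xs b" using Cons b_def by simp
      then show ?thesis using lb bx False by (simp add: pos_Cons)
    qed
  qed
qed

lemma order_contra:
  assumes "distinct (X1 @ X2)" "X1 @ X2 = Y1 @ Y2" "a \<in> set X1" "b \<in> set X2" "b \<in> set Y1" "a \<in> set Y2"
  shows False
proof -
  obtain us where "(X1 = Y1 @ us \<and> us @ X2 = Y2) \<or> (X1 @ us = Y1 \<and> X2 = us @ Y2)"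
    using assms(2) unfolding append_eq_append_conv2 by blast
  then show False
  proof
    assume "X1 = Y1 @ us \<and> us @ X2 = Y2"
    then have "b \<in> set X1" using assms(5) by simp
    then show False using assms(1,4) by auto
  next
    assume h: "X1 @ us = Y1 \<and> X2 = us @ Y2"
    then have "a \<in> set Y1" using assms(3) by auto
    moreover have "distinct (Y1 @ Y2)" using assms(1,2) by simp
    ultimately show False using assms(6) by auto
  qed
qed



lemma construct_contra:
  assumes rf: "rooted_forest n prec" and nl: "natural_labeling prec"
    and Sn: "S \<subseteq> {1..n}" and up: "\<forall>y z. y \<in> S \<longrightarrow> prec y z \<longrightarrow> z \<in> S"
    and i: "i \<in> {1..n}" and iS: "i \<notin> S"
    and FP: "\<And>\<pi>. \<pi> \<in> linext n prec \<Longrightarrow> filter (\<lambda>y. y \<notin> S) (hbdelta n prec i \<pi>) = filter (\<lambda>y. y \<notin> S) \<pi>"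
    and an: "a \<in> {1..n}" and aS: "a \<notin> S" and ia: "a = i \<or> prec i a"
    and aTop: "\<forall>y. (y = i \<or> prec i y) \<longrightarrow> y \<notin> S \<longrightarrow> y = a \<or> prec y a"
    and amax: "\<forall>z. prec a z \<longrightarrow> z \<in> S"
    and bn: "b \<in> {1..n}" and bS: "b \<notin> S" and ba: "b \<noteq> a"
    and bmax: "\<forall>z. prec b z \<longrightarrow> z \<in> S"
  shows False
proof -
  have sp: "strict_poset_on n prec" using rf sp_of by blast
  define P where "P = (\<lambda>y. y \<notin> S)"
  have nab: "\<not> prec a b" using amax bS by blast
  have nba: "\<not> prec b a" using bmax aS by blast
  have nib: "\<not> (b = i \<or> prec i b)"
  proof
    assume "b = i \<or> prec i b"
    then have "b = a \<or> prec b a" using aTop bS by blast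
    then show False using ba nba by blast
  qed
  define Rs where "Rs = {1..n} - S - {a, b}"
  define Rl where "Rl = sorted_list_of_set Rs"
  define Sl where "Sl = sorted_list_of_set S"
  have fS: "finite S" using Sn finite_subset by blast
  have fR: "finite Rs" unfolding Rs_def by simp
  have setRl: "set Rl = Rs" and dRl: "distinct Rl" and sRl: "sorted Rl" using fR unfolding Rl_def by auto
  have setSl: "set Sl = S" and dSl: "distinct Sl" and sSl: "sorted Sl" using fS unfolding Sl_def by auto
  define \<pi> where "\<pi> = Rl @ a # b # Sl"
  have posf: "pos \<pi> w = (if w \<in> Rs then pos Rl w else if w = a then Suc (length Rl)
      else if w = b then Suc (Suc (length Rl)) else Suc (Suc (length Rl + pos Sl w)))" for w
    unfolding \<pi>_def using ba by (auto simp: pos_append pos_Cons setRl Rs_def)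
  have \<pi>L: "\<pi> \<in> linext n prec"
    unfolding linext_def
  proof (intro CollectI conjI allI impI)
    show "distinct \<pi>" unfolding \<pi>_def using dRl dSl setRl setSl ba aS bS by (auto simp: Rs_def)
    show "set \<pi> = {1..n}" unfolding \<pi>_def using setRl setSl an bn Sn by (auto simp: Rs_def)
    fix y z assume yz: "prec y z"
    have yn: "y \<in> {1..n}" and zn: "z \<in> {1..n}" using sp_dom[OF sp yz] by auto
    have ylz: "y < z" using nl yz unfolding natural_labeling_def by blast
    show "pos \<pi> y < pos \<pi> z"
    proof (cases "z \<in> S")
      case zS: True
      have zR: "z \<notin> Rs" "z \<noteq> a" "z \<noteq> b" using zS aS bS by (auto simp: Rs_def)
      show ?thesis
      proof (cases "y \<in> S")
        case True
        have yR: "y \<notin> Rs" "y \<noteq> a" "y \<noteq> b" using True aS bS by (auto simp: Rs_def)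
        have "pos Sl y < pos Sl z" using sorted_pos[OF sSl dSl] True zS setSl ylz by simp
        then show ?thesis using posf zR yR by simp
      next
        case False
        have "pos \<pi> y \<le> Suc (Suc (length Rl))"
        proof (cases "y \<in> Rs")
          case True
          then have "pos Rl y \<le> length Rl" using pos_bounds[of y Rl] setRl by simp
          then show ?thesis using posf True by simp
        next
          case yR: False
          then have "y = a \<or> y = b" using yn False by (auto simp: Rs_def)
          then show ?thesis using posf yR ba by auto
        qed
        moreover have "pos \<pi> z = Suc (Suc (length Rl + pos Sl z))" using posf zR by simp
        ultimately show ?thesis using pos_ge1[of Sl z] by linarith
      qed
    next
      case zS: False
      have yS: "y \<notin> S" using up yz zS by blast
      have "y \<noteq> a" using amax yz zS by blast
      moreover have "y \<noteq> b" using bmax yz zS by blast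
      ultimately have yR: "y \<in> Rs" using yn yS by (simp add: Rs_def)
      have py: "pos Rl y \<le> length Rl" using pos_bounds[of y Rl] setRl yR by simp
      show ?thesis
      proof (cases "z \<in> Rs")
        case True
        have "pos Rl y < pos Rl z" using sorted_pos[OF sRl dRl] True yR setRl ylz by simp
        then show ?thesis using posf True yR by simp
      next
        case False
        then have "z = a \<or> z = b" using zn zS by (simp add: Rs_def)
        then show ?thesis using posf py yR False ba by auto
      qed
    qed
  qed
  have len\<pi>: "length \<pi> = n" using linext_length[OF \<pi>L] .
  define k where "k = Suc (length Rl)"
  define p where "p = pos \<pi> i"
  have iR: "i \<in> Rs \<or> i = a"
  proof -
    have "i \<noteq> b" using nib by blast
    then show ?thesis using i iS by (auto simp: Rs_def)
  qed
  have pk: "p \<le> k"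
  proof (cases "i \<in> Rs")
    case True
    then have "pos Rl i \<le> length Rl" using pos_bounds[of i Rl] setRl by simp
    then show ?thesis using posf True p_def k_def by simp
  next
    case False
    then have "i = a" using iR by simp
    then show ?thesis using posf False p_def k_def by simp
  qed
  have kn: "k < n" using len\<pi> k_def \<pi>_def by simp
  have \<pi>k1: "\<pi> ! (k - 1) = a" and \<pi>k: "\<pi> ! k = b" unfolding \<pi>_def k_def by (simp_all add: nth_append)
  define \<sigma> where "\<sigma> = ftau prec \<pi> [p..<k]"
  have I: "carryinv n prec \<pi> i k \<sigma>" unfolding \<sigma>_def p_def
    using carry[OF rf nl \<pi>L i] pk kn p_def by simp
  have sL: "\<sigma> \<in> linext n prec" using I unfolding carryinv_def by (rule conjunct1)
  have unt: "\<forall>q. k \<le> q \<longrightarrow> q < n \<longrightarrow> \<sigma> ! q = \<pi> ! q"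
    using I unfolding carryinv_def by (rule conjunct2[THEN conjunct1])
  have ex0: "\<exists>q. pos \<pi> i - 1 \<le> q \<and> q < k \<and> \<sigma> ! (k - 1) = \<pi> ! q"
    using I unfolding carryinv_def by (rule conjunct2[THEN conjunct2, THEN conjunct1])
  have je: "\<sigma> ! (k - 1) = i \<or> prec i (\<sigma> ! (k - 1))"
    using I unfolding carryinv_def by (rule conjunct2[THEN conjunct2, THEN conjunct2, THEN conjunct1])
  have mx: "\<forall>q. pos \<pi> i - 1 \<le> q \<longrightarrow> q < k \<longrightarrow> (\<pi> ! q = i \<or> prec i (\<pi> ! q)) \<longrightarrow>
        (\<pi> ! q = \<sigma> ! (k - 1) \<or> prec (\<pi> ! q) (\<sigma> ! (k - 1)))"
    using I unfolding carryinv_def by (rule conjunct2[THEN conjunct2, THEN conjunct2, THEN conjunct2, THEN conjunct1])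
  have slen: "length \<sigma> = n" using linext_length[OF sL] .
  define e where "e = \<sigma> ! (k - 1)"
  have eS: "e \<notin> S"
  proof -
    obtain q0 where q0: "q0 < k" "e = \<pi> ! q0" using ex0 e_def by blast
    show ?thesis
    proof (cases "q0 < length Rl")
      case True
      then have "e \<in> Rs" using q0 setRl unfolding \<pi>_def by (auto simp: nth_append)
      then show ?thesis by (simp add: Rs_def)
    next
      case False
      then have "q0 = k - 1" using q0 k_def by simp
      then show ?thesis using q0 \<pi>k1 aS by simp
    qed
  qed
  have ea: "e = a"
  proof (rule ccontr)
    assume ne: "e \<noteq> a"
    have "prec e a" using aTop je e_def eS ne by blast
    moreover have "a = e \<or> prec a e" using mx[rule_format, of "k - 1"] pk p_def \<pi>k1 ia e_def k_def by simp
    ultimately show False using ne sp_trans[OF sp] sp_irr[OF sp] by blast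
  qed
  have sk: "\<sigma> ! k = b" using unt kn \<pi>k by simp
  define \<sigma>' where "\<sigma>' = \<sigma>[k - 1 := \<sigma> ! k, k := \<sigma> ! (k - 1)]"
  have t: "tau prec k \<sigma> = \<sigma>'" unfolding tau_def \<sigma>'_def comparable_def
    using nab nba ea e_def sk by simp
  have k1: "1 \<le> k" using k_def by simp
  have s'L: "\<sigma>' \<in> linext n prec" using tau_linext[OF sp sL k1 kn] t by simp
  have s'k1: "\<sigma>' ! (k - 1) = b" and s'k: "\<sigma>' ! k = a"
    using slen kn k1 sk ea e_def unfolding \<sigma>'_def by (auto simp: nth_list_update)
  define fin where "fin = hbdelta n prec i \<pi>"
  have finL: "fin \<in> linext n prec" unfolding fin_def using hbdelta_linext[OF sp \<pi>L] .
  have "fin = ftau prec \<pi> [p..<n]" unfolding fin_def hbdelta_def bdelta_def p_def by simp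
  also have "\<dots> = ftau prec \<sigma> [k..<n]" unfolding \<sigma>_def using upt_split3[OF pk less_imp_le[OF kn]] by simp
  also have "\<dots> = ftau prec \<sigma>' [Suc k..<n]" using upt_conv_Cons[OF kn] t by simp
  finally have fin: "fin = ftau prec \<sigma>' [Suc k..<n]" .
  have tk: "take k fin = take k \<sigma>'" unfolding fin by (rule take_ftau) auto
  have bt: "b \<in> set (take k fin)"
  proof -
    have "take k \<sigma>' ! (k - 1) = b" using s'k1 k1 by simp
    moreover have "k - 1 < length (take k \<sigma>')" using k1 kn linext_length[OF s'L] by simp
    ultimately have "take k \<sigma>' ! (k - 1) \<in> set (take k \<sigma>')" using nth_mem by blast
    then show ?thesis using tk \<open>take k \<sigma>' ! (k - 1) = b\<close> by simp
  qed
  have ad: "a \<in> set (drop k fin)"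
  proof -
    have "a \<in> set (drop k \<sigma>')"
    proof -
      have "drop k \<sigma>' ! 0 = a" using s'k kn linext_length[OF s'L] by simp
      moreover have "0 < length (drop k \<sigma>')" using kn linext_length[OF s'L] by simp
      ultimately have "drop k \<sigma>' ! 0 \<in> set (drop k \<sigma>')" using nth_mem by blast
      then show ?thesis using \<open>drop k \<sigma>' ! 0 = a\<close> by simp
    qed
    then have "a \<notin> set (take k \<sigma>')"
      using set_take_disj_set_drop_if_distinct[OF linext_distinct[OF s'L], of k k] by blast
    then have "a \<notin> set (take k fin)" using tk by simp
    moreover have "a \<in> set fin" using an linext_set[OF finL] by simp
    moreover have "set fin = set (take k fin) \<union> set (drop k fin)"
      using set_append[of "take k fin" "drop k fin"] by simp
    ultimately show ?thesis by blast
  qed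
  have tkp: "take k \<pi> = Rl @ [a]" and dkp: "drop k \<pi> = b # Sl" unfolding \<pi>_def k_def by simp_all
  have eq: "filter P (take k fin) @ filter P (drop k fin) = filter P (Rl @ [a]) @ filter P (b # Sl)"
  proof -
    have "filter P fin = filter P \<pi>" unfolding fin_def P_def by (rule FP[OF \<pi>L])
    moreover have "fin = take k fin @ drop k fin" by simp
    moreover have "\<pi> = take k \<pi> @ drop k \<pi>" by simp
    ultimately have "filter P (take k fin @ drop k fin) = filter P (take k \<pi> @ drop k \<pi>)" by simp
    then show ?thesis using tkp dkp by (simp only: filter_append)
  qed
  have dist: "distinct (filter P (Rl @ [a]) @ filter P (b # Sl))"
  proof -
    have "distinct (filter P \<pi>)" using linext_distinct[OF \<pi>L] by simp
    moreover have "filter P \<pi> = filter P (Rl @ [a]) @ filter P (b # Sl)"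
      unfolding \<pi>_def by simp
    ultimately show ?thesis by simp
  qed
  have h1: "a \<in> set (filter P (Rl @ [a]))" using aS P_def by simp
  have h2: "b \<in> set (filter P (b # Sl))" using bS P_def by simp
  have h3: "b \<in> set (filter P (take k fin))" using bS bt P_def by simp
  have h4: "a \<in> set (filter P (drop k fin))" using aS ad P_def by simp
  show False by (rule order_contra[OF dist eq[symmetric] h1 h2 h3 h4])
qed



theorem lemma6p7:
  fixes n :: nat and prec :: "nat \<Rightarrow> nat \<Rightarrow> bool" and x :: "nat list \<Rightarrow> nat list"
  assumes "rooted_forest n prec"
    and "natural_labeling prec"
    and "x \<in> hmonoid n prec"
    and "idempotent_on n prec x"
  shows "Rfactor n prec x = Ifix n prec x"
proof -
  have rf: "rooted_forest n prec" and nl: "natural_labeling prec" and xM: "x \<in> hmonoid n prec"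
    and idem: "idempotent_on n prec x" using assms by simp_all
  have sp: "strict_poset_on n prec" using rf sp_of by blast
  have xL: "\<And>\<sigma>. \<sigma> \<in> linext n prec \<Longrightarrow> x \<sigma> \<in> linext n prec" using hmonoid_linext[OF sp xM] .
  define u where "u = rfactor n prec x"
  define S where "S = set u"
  have id0: "[1..<Suc n] \<in> linext n prec" using upt_linext[OF sp nl] .
  have imgI: "\<And>\<pi>. \<pi> \<in> linext n prec \<Longrightarrow> x \<pi> \<in> img n prec x" unfolding img_def by blast
  have ne: "img n prec x \<noteq> {}" using imgI[OF id0] by blast
  have lenimg: "\<forall>w\<in>img n prec x. length w = n" unfolding img_def using xL linext_length by blast
  have U: "(\<forall>w\<in>img n prec x. suffix u w) \<and>
         (\<forall>v. (\<forall>w\<in>img n prec x. suffix v w) \<longrightarrow> length v \<le> length u)"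
    using rfactor_props[OF ne lenimg] unfolding u_def .
  have U1: "\<And>w. w \<in> img n prec x \<Longrightarrow> suffix u w" using U by blast
  have U2: "\<And>v. (\<forall>w\<in>img n prec x. suffix v w) \<Longrightarrow> length v \<le> length u" using U by blast
  have imgE: "\<And>w. w \<in> img n prec x \<Longrightarrow> w \<in> linext n prec \<and> x w = w"
  proof -
    fix w assume "w \<in> img n prec x"
    then obtain \<pi> where \<pi>: "\<pi> \<in> linext n prec" "w = x \<pi>" unfolding img_def by blast
    then show "w \<in> linext n prec \<and> x w = w" using xL idem unfolding idempotent_on_def by simp
  qed
  define \<sigma>0 where "\<sigma>0 = x [1..<Suc n]"
  have s0i: "\<sigma>0 \<in> img n prec x" using imgI[OF id0] \<sigma>0_def by simp
  have s0L: "\<sigma>0 \<in> linext n prec" using imgE[OF s0i] by blast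
  obtain \<beta>0 where b0: "\<sigma>0 = \<beta>0 @ u" using U1[OF s0i] unfolding suffix_def by blast
  have up: "\<forall>y z. y \<in> S \<longrightarrow> prec y z \<longrightarrow> z \<in> S"
  proof (intro allI impI)
    fix y z assume yS: "y \<in> S" and yz: "prec y z"
    show "z \<in> S"
    proof (rule ccontr)
      assume zS: "z \<notin> S"
      have "z \<in> set \<sigma>0" using sp_dom[OF sp yz] linext_set[OF s0L] by simp
      then have zb: "z \<in> set \<beta>0" using zS b0 S_def by simp
      have yb: "y \<notin> set \<beta>0" using linext_app_disj[OF s0L b0] yS S_def by blast
      have "pos \<sigma>0 z = pos \<beta>0 z" using zb b0 by (simp add: pos_append)
      moreover have "pos \<beta>0 z \<le> length \<beta>0" using pos_bounds[OF zb] by simp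
      moreover have "pos \<sigma>0 y = length \<beta>0 + pos u y" using yb b0 by (simp add: pos_append)
      moreover have "pos \<sigma>0 y < pos \<sigma>0 z" using s0L yz unfolding linext_def by blast
      ultimately show False using pos_ge1[of u y] by linarith
    qed
  qed
  define P where "P = (\<lambda>y. y \<notin> S)"
  have notG: "\<not> Gprop n prec S x"
  proof
    assume G: "Gprop n prec S x"
    have GW: "\<exists>W. suffix W \<sigma> \<and> suffix W \<sigma>0 \<and> length u < length W" if \<sigma>i: "\<sigma> \<in> img n prec x" for \<sigma>
    proof -
      have \<sigma>L: "\<sigma> \<in> linext n prec" and x\<sigma>: "x \<sigma> = \<sigma>" using imgE[OF \<sigma>i] by auto
      obtain \<beta> where b: "\<sigma> = \<beta> @ u" using U1[OF \<sigma>i] unfolding suffix_def by blast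
      have "\<exists>W. suffix W (x \<sigma>) \<and> suffix W (x \<sigma>0) \<and> length u < length W"
        using G[unfolded Gprop_def, rule_format, OF \<sigma>L s0L b b0] S_def by blast
      then show ?thesis using x\<sigma> imgE[OF s0i] by simp
    qed
    obtain W0 where W0: "suffix W0 \<sigma>0" "length u < length W0" using GW[OF s0i] by blast
    have "length W0 \<le> n" using suffix_len[OF W0(1)] linext_length[OF s0L] by simp
    then have un: "Suc (length u) \<le> n" using W0 by simp
    define v where "v = drop (n - Suc (length u)) \<sigma>0"
    have lv: "length v = Suc (length u)" using un linext_length[OF s0L] v_def by simp
    have vs0: "suffix v \<sigma>0" unfolding v_def by (rule suffix_drop)
    have "\<forall>w\<in>img n prec x. suffix v w"
    proof
      fix w assume wi: "w \<in> img n prec x"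
      obtain W where W: "suffix W w" "suffix W \<sigma>0" "length u < length W" using GW[OF wi] by blast
      have "suffix v W" using suffix_length_suffix[OF vs0 W(2)] lv W(3) by simp
      then show "suffix v w" using W(1) suffix_order.trans by blast
    qed
    then have "length v \<le> length u" by (rule U2)
    then show False using lv by simp
  qed
  have Q: "Qprop n prec S x" using H[OF rf nl up xM] notG by blast
  have Q1: "\<And>\<pi>. \<pi> \<in> linext n prec \<Longrightarrow> filter P (x \<pi>) = filter P \<pi>"
    using Q[unfolded Qprop_def, THEN conjunct1] P_def by blast
  have K: "\<And>\<pi>. \<pi> \<in> linext n prec \<Longrightarrow> x \<pi> = filter P \<pi> @ u"
  proof -
    fix \<pi> assume \<pi>: "\<pi> \<in> linext n prec"
    obtain \<beta> where b: "x \<pi> = \<beta> @ u" using U1[OF imgI[OF \<pi>]] unfolding suffix_def by blast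
    have "set \<beta> \<inter> set u = {}" using linext_app_disj[OF xL[OF \<pi>] b] by blast
    then have "filter P (x \<pi>) = \<beta>" using b unfolding P_def S_def
      by (auto simp: filter_empty_conv intro!: filter_True)
    then show "x \<pi> = filter P \<pi> @ u" using b Q1[OF \<pi>] by simp
  qed
  have R: "Rfactor n prec x = S" unfolding Rfactor_def S_def u_def by simp
  have Sn: "S \<subseteq> {1..n}" using b0 linext_set[OF s0L] S_def by auto
  have "S = Ifix n prec x"
  proof
    show "S \<subseteq> Ifix n prec x"
    proof
      fix i assume iS: "i \<in> S"
      have i: "i \<in> {1..n}" using iS Sn by blast
      have hP: "\<forall>y. (y = i \<or> prec i y) \<longrightarrow> \<not> P y" using iS up unfolding P_def by blast
      have "x (hbdelta n prec i \<pi>) = x \<pi>" if \<pi>: "\<pi> \<in> linext n prec" for \<pi>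
      proof -
        have hL: "hbdelta n prec i \<pi> \<in> linext n prec" using hbdelta_linext[OF sp \<pi>] .
        have "filter P (hbdelta n prec i \<pi>) = filter P \<pi>" by (rule filt_hb[OF rf nl \<pi> i hP])
        then show ?thesis using K[OF hL] K[OF \<pi>] by simp
      qed
      then show "i \<in> Ifix n prec x" unfolding Ifix_def using i by blast
    qed
  next
    show "Ifix n prec x \<subseteq> S"
    proof
      fix i assume iI: "i \<in> Ifix n prec x"
      have i: "i \<in> {1..n}" and fx: "\<And>\<pi>. \<pi> \<in> linext n prec \<Longrightarrow> x (hbdelta n prec i \<pi>) = x \<pi>"
        using iI unfolding Ifix_def by auto
      show "i \<in> S"
      proof (rule ccontr)
        assume iS: "i \<notin> S"
        have Pi: "P i" using iS P_def by simp
        have FP: "\<And>\<pi>. \<pi> \<in> linext n prec \<Longrightarrow> filter P (hbdelta n prec i \<pi>) = filter P \<pi>"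
        proof -
          fix \<pi> assume \<pi>: "\<pi> \<in> linext n prec"
          have "filter P (hbdelta n prec i \<pi>) @ u = filter P \<pi> @ u"
            using K[OF hbdelta_linext[OF sp \<pi>]] K[OF \<pi>] fx[OF \<pi>] by simp
          then show "filter P (hbdelta n prec i \<pi>) = filter P \<pi>" by simp
        qed
        define A where "A = {y. (y = i \<or> prec i y) \<and> y \<notin> S}"
        have An: "A \<subseteq> {1..n}" using i sp_dom[OF sp] unfolding A_def by blast
        have fA: "finite A" using An finite_subset by blast
        have iA: "i \<in> A" using iS A_def by simp
        define a where "a = Max A"
        have aA: "a \<in> A" unfolding a_def using Max_in[OF fA] iA by blast
        have aM: "\<And>y. y \<in> A \<Longrightarrow> y \<le> a" unfolding a_def using Max_ge[OF fA] by blast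
        have ia: "a = i \<or> prec i a" and aS: "a \<notin> S" using aA A_def by auto
        have an: "a \<in> {1..n}" using aA An by blast
        have aTop: "\<forall>y. (y = i \<or> prec i y) \<longrightarrow> y \<notin> S \<longrightarrow> y = a \<or> prec y a"
        proof (intro allI impI)
          fix y assume iy: "y = i \<or> prec i y" and yS: "y \<notin> S"
          have ya: "y \<le> a" using aM iy yS A_def by simp
          show "y = a \<or> prec y a"
          proof (cases "y = a")
            case False
            show ?thesis
            proof (cases "y = i")
              case True
              then show ?thesis using ia False by auto
            next
              case yi: False
              then have piy: "prec i y" using iy by simp
              then have "i < y" using nl unfolding natural_labeling_def by blast
              then have ai: "a \<noteq> i" using ya by simp
              then have pia: "prec i a" using ia by simp
              have "\<not> prec a y"
              proof
                assume "prec a y"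
                then have "a < y" using nl unfolding natural_labeling_def by blast
                then show False using ya by simp
              qed
              then show ?thesis using forest_chain[OF rf nl piy pia] False by blast
            qed
          qed simp
        qed
        have amax: "\<forall>z. prec a z \<longrightarrow> z \<in> S"
        proof (intro allI impI)
          fix z assume az: "prec a z"
          show "z \<in> S"
          proof (rule ccontr)
            assume zS: "z \<notin> S"
            have "prec i z" using ia az sp_trans[OF sp] by blast
            then have "z \<in> A" using zS A_def by simp
            then have "z \<le> a" by (rule aM)
            moreover have "a < z" using nl az unfolding natural_labeling_def by blast
            ultimately show False by simp
          qed
        qed
        have fne: "\<And>\<pi>. \<pi> \<in> linext n prec \<Longrightarrow> filter P \<pi> \<noteq> []"
        proof -
          fix \<pi> assume \<pi>: "\<pi> \<in> linext n prec"
          have "i \<in> set \<pi>" using i linext_set[OF \<pi>] by simp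
          then show "filter P \<pi> \<noteq> []" using Pi by (auto simp: filter_empty_conv)
        qed
        obtain \<pi>1 where \<pi>1: "\<pi>1 \<in> linext n prec" "last (filter P \<pi>1) \<noteq> a"
        proof (rule ccontr)
          assume "\<not> thesis"
          then have all: "\<And>\<pi>. \<pi> \<in> linext n prec \<Longrightarrow> last (filter P \<pi>) = a" using that by blast
          have "\<forall>w\<in>img n prec x. suffix (a # u) w"
          proof
            fix w assume "w \<in> img n prec x"
            then obtain \<pi> where \<pi>: "\<pi> \<in> linext n prec" "w = x \<pi>" unfolding img_def by blast
            have "filter P \<pi> = butlast (filter P \<pi>) @ [a]"
              using append_butlast_last_id[OF fne[OF \<pi>(1)]] all[OF \<pi>(1)] by simp
            then have "w = butlast (filter P \<pi>) @ (a # u)" using K[OF \<pi>(1)] \<pi>(2) by simp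
            then show "suffix (a # u) w" unfolding suffix_def by blast
          qed
          then have "length (a # u) \<le> length u" by (rule U2)
          then show False by simp
        qed
        define b where "b = last (filter P \<pi>1)"
        have bin: "b \<in> set (filter P \<pi>1)" unfolding b_def by (rule last_in_set[OF fne[OF \<pi>1(1)]])
        have bS: "b \<notin> S" using bin P_def by simp
        have bn: "b \<in> {1..n}" using bin linext_set[OF \<pi>1(1)] by auto
        have ba: "b \<noteq> a" using \<pi>1(2) b_def by simp
        have bmax: "\<forall>z. prec b z \<longrightarrow> z \<in> S"
        proof (intro allI impI)
          fix z assume bz: "prec b z"
          show "z \<in> S"
          proof (rule ccontr)
            assume zS: "z \<notin> S"
            have zin: "z \<in> set \<pi>1" using sp_dom[OF sp bz] linext_set[OF \<pi>1(1)] by simp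
            have "z \<noteq> b" using bz sp_irr[OF sp] by blast
            then have "pos \<pi>1 z < pos \<pi>1 b"
              using last_filter_pos[OF linext_distinct[OF \<pi>1(1)] zin, of P] zS P_def b_def by simp
            moreover have "pos \<pi>1 b < pos \<pi>1 z" using \<pi>1(1) bz unfolding linext_def by blast
            ultimately show False by simp
          qed
        qed
        have FP': "\<And>\<pi>. \<pi> \<in> linext n prec \<Longrightarrow> filter (\<lambda>y. y \<notin> S) (hbdelta n prec i \<pi>) = filter (\<lambda>y. y \<notin> S) \<pi>"
          using FP unfolding P_def .
        show False by (rule construct_contra[OF rf nl Sn up i iS FP' an aS ia aTop amax bn bS ba bmax])
      qed
    qed
  qed
  then show ?thesis using R by simp
qed

end
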